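(* Let $\phi:\mathbb{R}\to\mathbb{R}^{+}$ be continuous and, for $x\in\mathbb{R}^m$, let $\Phi(x)_k=\phi(x_k)/\sum_{j=1}^m\phi(x_j)$. Let $\mathcal{X}\subset\mathbb{R}^d$ be a compact input feature space, and for each $n$ let $X^{(n)}=(x^{(n)}_1,\dots,x^{(n)}_n)\in\mathcal{X}^n$ be input features for $n$ items. Let $Q^{(n)}=\gamma(x^{(n)}_1,\dots,x^{(n)}_n)\in\mathbb{R}^{n\times d}$ and $K^{(n)}=\kappa(x^{(n)}_1,\dots,x^{(n)}_n)\in\mathbb{R}^{n\times d}$, where $\gamma,\kappa:\mathcal{X}^n\to\mathbb{R}^{n\times d}$ are continuous maps, each expressible as a composition of $L$ layers $g_L\circ f_L\circ\cdots\circ g_1\circ f_1$ (with $L$ and the layer maps not depending on $n$), where each $f_i$ is a feedforward component acting tokenwise, $f_i(z_1,\dots,z_n)_k=f_i(z_k)$, and each $g_i$ is a self $\Phi$-normalized attentional component $g_i(z_1,\dots,z_n)_k=\sum_{1\le l\le n}\alpha_{lk}v_i(z_l)$, where $v_i$ is a feedforward network and $\alpha_{lk}\in[0,1]$ are $\Phi$-normalized attention coefficients. Let $e^{(n)}_{ij}=q^{(n)}_i(k^{(n)}_j)^T$, where $q^{(n)}_i,k^{(n)}_j$ are the $i$-th row of $Q^{(n)}$ and $j$-th row of $K^{(n)}$. Then for any $\epsilon>0$ there exists $n\in\mathbb{N}$ such that for every query index $i$, $\Phi(e^{(n)}_{i,\cdot})_k<\epsilon$ for all $1\le k\le n$; that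 is, the $\Phi$-normalized attention coefficients disperse.
   Context: $\Phi$-normalized attention coefficients: for tokens $z_1,\dots,z_n$, $\alpha_{lk}=\phi(\psi_q(z)_k\psi_k(z)_l^T)/\sum_{j=1}^n\phi(\psi_q(z)_k\psi_k(z)_j^T)$, where $\psi_q,\psi_k$ are continuous query/key maps and $\phi:\mathbb{R}\to\mathbb{R}^+$ is continuous. Feedforward components and networks are continuous maps $\mathbb{R}^d\to\mathbb{R}^d$. *)

theory Defs
  imports "HOL-Analysis.Analysis"
begin

text \<open>Token sequences of length n are functions nat \<Rightarrow> 'a, only indices k < n matter
  (0-based indexing). The token space 'a plays the role of R^d.\<close>

definition Phi :: "(real \<Rightarrow> real) \<Rightarrow> nat \<Rightarrow> (nat \<Rightarrow> real) \<Rightarrow> nat \<Rightarrow> real" where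
  "Phi \<phi> m x k = \<phi> (x k) / (\<Sum>j<m. \<phi> (x j))"

definition ff_layer :: "('a \<Rightarrow> 'b) \<Rightarrow> (nat \<Rightarrow> 'a) \<Rightarrow> (nat \<Rightarrow> 'b)" where
  "ff_layer f z = (\<lambda>k. f (z k))"

definition attn_coeff :: "(real \<Rightarrow> real) \<Rightarrow> ('a \<Rightarrow> 'b::real_inner) \<Rightarrow> ('a \<Rightarrow> 'b)
    \<Rightarrow> nat \<Rightarrow> (nat \<Rightarrow> 'a) \<Rightarrow> nat \<Rightarrow> nat \<Rightarrow> real" where
  "attn_coeff \<phi> psi_q psi_k n z l k =
     \<phi> (psi_q (z k) \<bullet> psi_k (z l)) / (\<Sum>j<n. \<phi> (psi_q (z k) \<bullet> psi_k (z j)))"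

definition attn_layer :: "(real \<Rightarrow> real) \<Rightarrow> ('a \<Rightarrow> 'b::real_inner) \<Rightarrow> ('a \<Rightarrow> 'b)
    \<Rightarrow> ('a \<Rightarrow> 'c::real_vector) \<Rightarrow> nat \<Rightarrow> (nat \<Rightarrow> 'a) \<Rightarrow> (nat \<Rightarrow> 'c)" where
  "attn_layer \<phi> psi_q psi_k v n z = (\<lambda>k. \<Sum>l<n. attn_coeff \<phi> psi_q psi_k n z l k *\<^sub>R v (z l))"

text \<open>A layer is a tuple (f, psi_q, psi_k, v): feedforward component f followed by the
  attentional component with query/key maps psi_q, psi_k and value network v.
  A list [layer_1, ..., layer_L] denotes g_L o f_L o ... o g_1 o f_1.\<close>
type_synonym 'a layer = "('a \<Rightarrow> 'a) \<times> ('a \<Rightarrow> 'a) \<times> ('a \<Rightarrow> 'a) \<times> ('a \<Rightarrow> 'a)"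

fun apply_layer :: "(real \<Rightarrow> real) \<Rightarrow> 'a::real_inner layer \<Rightarrow> nat \<Rightarrow> (nat \<Rightarrow> 'a) \<Rightarrow> (nat \<Rightarrow> 'a)" where
  "apply_layer \<phi> (f, psi_q, psi_k, v) n z = attn_layer \<phi> psi_q psi_k v n (ff_layer f z)"

primrec apply_layers :: "(real \<Rightarrow> real) \<Rightarrow> 'a::real_inner layer list \<Rightarrow> nat \<Rightarrow> (nat \<Rightarrow> 'a) \<Rightarrow> (nat \<Rightarrow> 'a)" where
  "apply_layers \<phi> [] n z = z"
| "apply_layers \<phi> (ly # lys) n z = apply_layers \<phi> lys n (apply_layer \<phi> ly n z)"

definition layer_continuous :: "'a::topological_space layer \<Rightarrow> bool" where
  "layer_continuous ly = (case ly of (f, psi_q, psi_k, v) \<Rightarrow>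
     continuous_on UNIV f \<and> continuous_on UNIV psi_q \<and> continuous_on UNIV psi_k \<and> continuous_on UNIV v)"

end

theory Submission
  imports Defs
begin

lemma coeff_sum:
  assumes phi_pos: "\<And>t. \<phi> t > 0" and "k < n"
  shows "(\<Sum>l<n. attn_coeff \<phi> pq pk n z l k) = 1"
    and "\<And>l. attn_coeff \<phi> pq pk n z l k \<ge> 0"
proof -
  have pos: "(\<Sum>j<n. \<phi> (pq (z k) \<bullet> pk (z j))) > 0"
    using assms by (intro sum_pos) (auto intro: less_imp_le)
  show "(\<Sum>l<n. attn_coeff \<phi> pq pk n z l k) = 1"
    unfolding attn_coeff_def using pos by (simp add: sum_divide_distrib[symmetric])
  show "\<And>l. attn_coeff \<phi> pq pk n z l k \<ge> 0"
    unfolding attn_coeff_def using pos phi_pos by (simp add: less_imp_le)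
qed

lemma layer_bounded:
  fixes ly :: "'a::euclidean_space layer"
  assumes phi_pos: "\<And>t. \<phi> t > 0" and lc: "layer_continuous ly"
  shows "\<exists>B. \<forall>n z. (\<forall>l<n. norm (z l) \<le> R) \<longrightarrow> (\<forall>k<n. norm (apply_layer \<phi> ly n z k) \<le> B)"
proof -
  obtain f pq pk v where ly: "ly = (f, pq, pk, v)" by (cases ly) auto
  have cf: "continuous_on UNIV f" and cv: "continuous_on UNIV v"
    using lc ly by (auto simp: layer_continuous_def)
  have "continuous_on (cball 0 R) (v \<circ> f)"
    using cf cv by (meson continuous_on_compose continuous_on_subset subset_UNIV)
  then have "compact ((v \<circ> f) ` cball 0 R)"
    by (intro compact_continuous_image) auto
  then have "bounded ((v \<circ> f) ` cball 0 R)" by (rule compact_imp_bounded)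
  then obtain B where B0: "\<forall>y\<in>(v \<circ> f) ` cball 0 R. norm y \<le> B"
    unfolding bounded_iff by blast
  have B: "\<And>x. x \<in> cball 0 R \<Longrightarrow> norm (v (f x)) \<le> B"
    using B0 by (metis comp_apply image_eqI)
  show ?thesis
  proof (intro exI allI impI)
    fix n :: nat and z :: "nat \<Rightarrow> 'a" and k assume zR: "\<forall>l<n. norm (z l) \<le> (R::real)" and k: "k < n"
    let ?c = "\<lambda>l. attn_coeff \<phi> pq pk n (ff_layer f z) l k"
    have "norm (apply_layer \<phi> ly n z k) = norm (\<Sum>l<n. ?c l *\<^sub>R v (ff_layer f z l))"
      by (simp add: ly attn_layer_def)
    also have "\<dots> \<le> (\<Sum>l<n. norm (?c l *\<^sub>R v (ff_layer f z l)))" by (rule norm_sum)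
    also have "\<dots> \<le> (\<Sum>l<n. ?c l * B)"
    proof (rule sum_mono)
      fix l assume "l \<in> {..<n}"
      then have "norm (v (f (z l))) \<le> B" using zR B by auto
      then show "norm (?c l *\<^sub>R v (ff_layer f z l)) \<le> ?c l * B"
      proof -
        have c0: "?c l \<ge> 0" by (rule coeff_sum(2)[where \<phi>=\<phi>, OF phi_pos k])
        then show ?thesis using \<open>norm (v (f (z l))) \<le> B\<close>
          by (simp add: ff_layer_def mult_left_mono)
      qed
    qed
    also have "\<dots> = B" using coeff_sum(1)[where \<phi>=\<phi> and pq=pq and pk=pk and z="ff_layer f z", OF phi_pos k]
      by (simp add: sum_distrib_right[symmetric])
    finally show "norm (apply_layer \<phi> ly n z k) \<le> B" .
  qed
qed

lemma layers_bounded: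
  fixes lys :: "'a::euclidean_space layer list"
  assumes phi_pos: "\<And>t. \<phi> t > 0" and lc: "\<forall>ly\<in>set lys. layer_continuous ly"
  shows "\<exists>B. \<forall>n z. (\<forall>l<n. norm (z l) \<le> R) \<longrightarrow> (\<forall>k<n. norm (apply_layers \<phi> lys n z k) \<le> B)"
  using lc
proof (induction lys arbitrary: R)
  case Nil
  then show ?case by auto
next
  case (Cons ly lys)
  obtain B1 where B1: "\<forall>n z. (\<forall>l<n. norm (z l) \<le> R) \<longrightarrow> (\<forall>k<n. norm (apply_layer \<phi> ly n z k) \<le> B1)"
    using layer_bounded[where \<phi>=\<phi>, OF phi_pos, of ly R] Cons.prems by auto
  obtain B2 where B2: "\<forall>n z. (\<forall>l<n. norm (z l) \<le> B1) \<longrightarrow> (\<forall>k<n. norm (apply_layers \<phi> lys n z k) \<le> B2)"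
    using Cons.IH[of B1] Cons.prems by auto
  show ?case
  proof (intro exI[of _ B2] allI impI)
    fix n :: nat and z :: "nat \<Rightarrow> 'a" and k assume "\<forall>l<n. norm (z l) \<le> R" "k < n"
    then show "norm (apply_layers \<phi> (ly # lys) n z k) \<le> B2"
    proof -
      have "\<forall>l<n. norm (apply_layer \<phi> ly n z l) \<le> B1" using B1 \<open>\<forall>l<n. norm (z l) \<le> R\<close> by blast
      then have "\<forall>k<n. norm (apply_layers \<phi> lys n (apply_layer \<phi> ly n z) k) \<le> B2" using B2 by blast
      then show ?thesis using \<open>k < n\<close> by simp
    qed
  qed
qed

theorem theorem1:
  fixes \<phi> :: "real \<Rightarrow> real"
    and \<X> :: "'a::euclidean_space set"
    and Xs :: "nat \<Rightarrow> nat \<Rightarrow> 'a"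
    and L :: nat
    and Lg Lk :: "'a layer list"
  assumes phi_cont: "continuous_on UNIV \<phi>"
    and phi_pos: "\<And>t. \<phi> t > 0"
    and X_compact: "compact \<X>"
    and inputs: "\<And>n k. k < n \<Longrightarrow> Xs n k \<in> \<X>"
    and len_g: "length Lg = L" and len_k: "length Lk = L"
    and cont_g: "\<forall>ly \<in> set Lg. layer_continuous ly"
    and cont_k: "\<forall>ly \<in> set Lk. layer_continuous ly"
  shows "\<forall>\<epsilon>>0. \<exists>n\<ge>1. \<forall>i<n. \<forall>k<n.
           Phi \<phi> n (\<lambda>j. apply_layers \<phi> Lg n (Xs n) i \<bullet> apply_layers \<phi> Lk n (Xs n) j) k < \<epsilon>"
proof (intro allI impI)
  fix \<epsilon> :: real assume eps: "\<epsilon> > 0"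
  have "bounded \<X>" using X_compact by (rule compact_imp_bounded)
  then obtain R where R: "\<And>x. x \<in> \<X> \<Longrightarrow> norm x \<le> R"
    unfolding bounded_iff by auto
  have XR: "\<And>n. \<forall>l<n. norm (Xs n l) \<le> R" using R inputs by auto
  from layers_bounded[where \<phi>=\<phi>, OF phi_pos cont_g, of R]
  obtain Bg where Bg0: "\<forall>n z. (\<forall>l<n. norm (z l) \<le> R) \<longrightarrow> (\<forall>k<n. norm (apply_layers \<phi> Lg n z k) \<le> Bg)" ..
  have Bg: "\<And>n k. k < n \<Longrightarrow> norm (apply_layers \<phi> Lg n (Xs n) k) \<le> Bg"
  proof -
    fix n k :: nat assume "k < n"
    have "\<forall>k<n. norm (apply_layers \<phi> Lg n (Xs n) k) \<le> Bg"
      using mp[OF spec[OF spec[OF Bg0, of n], of "Xs n"] XR[of n]] .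
    then show "norm (apply_layers \<phi> Lg n (Xs n) k) \<le> Bg" using \<open>k < n\<close> by blast
  qed
  from layers_bounded[where \<phi>=\<phi>, OF phi_pos cont_k, of R]
  obtain Bk where Bk0: "\<forall>n z. (\<forall>l<n. norm (z l) \<le> R) \<longrightarrow> (\<forall>k<n. norm (apply_layers \<phi> Lk n z k) \<le> Bk)" ..
  have Bk: "\<And>n k. k < n \<Longrightarrow> norm (apply_layers \<phi> Lk n (Xs n) k) \<le> Bk"
  proof -
    fix n k :: nat assume "k < n"
    have "\<forall>k<n. norm (apply_layers \<phi> Lk n (Xs n) k) \<le> Bk"
      using mp[OF spec[OF spec[OF Bk0, of n], of "Xs n"] XR[of n]] .
    then show "norm (apply_layers \<phi> Lk n (Xs n) k) \<le> Bk" using \<open>k < n\<close> by blast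
  qed
  define C where "C = \<bar>Bg\<bar> * \<bar>Bk\<bar>"
  have eC: "\<And>n i j. i < n \<Longrightarrow> j < n \<Longrightarrow>
      apply_layers \<phi> Lg n (Xs n) i \<bullet> apply_layers \<phi> Lk n (Xs n) j \<in> {-C..C}"
  proof -
    fix n i j :: nat assume "i < n" "j < n"
    then have "norm (apply_layers \<phi> Lg n (Xs n) i) \<le> \<bar>Bg\<bar>" "norm (apply_layers \<phi> Lk n (Xs n) j) \<le> \<bar>Bk\<bar>"
      using Bg Bk by force+
    then have "\<bar>apply_layers \<phi> Lg n (Xs n) i \<bullet> apply_layers \<phi> Lk n (Xs n) j\<bar> \<le> C"
    proof -
      have "\<bar>apply_layers \<phi> Lg n (Xs n) i \<bullet> apply_layers \<phi> Lk n (Xs n) j\<bar>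
          \<le> norm (apply_layers \<phi> Lg n (Xs n) i) * norm (apply_layers \<phi> Lk n (Xs n) j)"
        by (rule Cauchy_Schwarz_ineq2)
      also have "\<dots> \<le> \<bar>Bg\<bar> * \<bar>Bk\<bar>"
        by (rule mult_mono) (use \<open>norm (apply_layers \<phi> Lg n (Xs n) i) \<le> \<bar>Bg\<bar>\<close> \<open>norm (apply_layers \<phi> Lk n (Xs n) j) \<le> \<bar>Bk\<bar>\<close> in auto)
      finally show ?thesis unfolding C_def .
    qed
    then show "apply_layers \<phi> Lg n (Xs n) i \<bullet> apply_layers \<phi> Lk n (Xs n) j \<in> {-C..C}" by auto
  qed
  have ne: "{-C..C} \<noteq> {}" unfolding C_def by auto
  have pc: "continuous_on {-C..C} \<phi>" using phi_cont continuous_on_subset by blast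
  obtain xm where xm: "xm \<in> {-C..C}" "\<And>y. y \<in> {-C..C} \<Longrightarrow> \<phi> xm \<le> \<phi> y"
    using continuous_attains_inf[OF compact_Icc ne pc] by blast
  obtain xM where xM: "xM \<in> {-C..C}" "\<And>y. y \<in> {-C..C} \<Longrightarrow> \<phi> y \<le> \<phi> xM"
    using continuous_attains_sup[OF compact_Icc ne pc] by blast
  define m where "m = \<phi> xm"
  define M where "M = \<phi> xM"
  have m0: "m > 0" using phi_pos m_def by auto
  obtain n0 :: nat where n0: "M / (m * \<epsilon>) < n0" using reals_Archimedean2 by blast
  define n where "n = Suc n0"
  have n: "n > M / (m * \<epsilon>)" "n \<ge> 1" using n0 unfolding n_def by auto
  show "\<exists>n\<ge>1. \<forall>i<n. \<forall>k<n.
           Phi \<phi> n (\<lambda>j. apply_layers \<phi> Lg n (Xs n) i \<bullet> apply_layers \<phi> Lk n (Xs n) j) k < \<epsilon>"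
  proof (intro exI[of _ n] conjI allI impI)
    show "1 \<le> n" by fact
    fix i k assume i: "i < n" and k: "k < n"
    let ?e = "\<lambda>j. apply_layers \<phi> Lg n (Xs n) i \<bullet> apply_layers \<phi> Lk n (Xs n) j"
    have sum_ge: "(\<Sum>j<n. \<phi> (?e j)) \<ge> (\<Sum>j<n. m)"
      by (rule sum_mono) (use eC xm i m_def in auto)
    then have sg: "(\<Sum>j<n. \<phi> (?e j)) \<ge> n * m" by simp
    have nm: "n * m > 0" using n m0 by auto
    have top: "\<phi> (?e k) \<le> M" using xM eC i k M_def by auto
    have "Phi \<phi> n ?e k = \<phi> (?e k) / (\<Sum>j<n. \<phi> (?e j))" by (simp add: Phi_def)
    also have "\<dots> \<le> M / (n * m)"
    proof (rule frac_le)
      show "0 \<le> M" using phi_pos[of xM] M_def by simp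
    qed (use top sg nm in auto)
    also have "\<dots> < \<epsilon>"
    proof -
      have "M / (m * \<epsilon>) < n" by fact
      then have "M < n * (m * \<epsilon>)" using m0 eps by (simp add: pos_divide_less_eq)
      also have "n * (m * \<epsilon>) = \<epsilon> * (n * m)" by (simp add: algebra_simps)
      finally have "M < \<epsilon> * (n * m)" .
      then show ?thesis using nm by (simp add: pos_divide_less_eq)
    qed
    finally show "Phi \<phi> n ?e k < \<epsilon>" .
  qed
qed

end
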